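(* Let $f\in\mathcal{C}(2\pi)$ and $m,n\ge0$. Then $$E^\alpha_{mn}(f;[-\pi,\pi])\le\frac{1+|\alpha|_\infty(\|Id-L\|-1)}{1-|\alpha|_\infty}\,E_{mn}(f;[-\pi,\pi])+\frac{|\alpha|_\infty}{1-|\alpha|_\infty}\|Id-L\|\,\|f\|_\infty,$$ where $\|Id-L\|$ is the operator norm.
   Context: Let $I=[x_0,x_N]=[-\pi,\pi]$, $N\ge2$, $\Delta=\{x_0<x_1<\dots<x_N\}$, $I_i=[x_{i-1},x_i]$, and $L_i(x)=a_ix+b_i$ the affine map of $I$ onto $I_i$ with $L_i(x_0)=x_{i-1}$, $L_i(x_N)=x_i$; $\alpha\in(-1,1)^N$, $|\alpha|_\infty=\max_i|\alpha_i|$. For $f,b$ continuous with $b(x_0)=f(x_0)$, $b(x_N)=f(x_N)$, $f^\alpha_{\Delta,b}$ is the unique continuous $g$ with $g(x)=f(x)+\alpha_i(g-b)(L_i^{-1}(x))$ for $x\in I_i$. $L:\mathcal{C}(2\pi)\to\mathcal{C}(2\pi)$ is bounded linear with $(Lf)(x_0)=f(x_0)$, $(Lf)(x_N)=f(x_N)$, and $\mathcal{F}^\alpha_{\Delta,L}(f)=f^\alpha_{\Delta,Lf}$. $\mathcal{C}(2\pi)=\{f\in\mathcal{C}([-\pi,\pi]):f(-\pi)=f(\pi)\}$ with sup norm; $\mathfrak{T}_m$ = real trigonometric polynomials of degree $\le m$; $\mathfrak{R}_{mn}(2\pi)=\{p/q:p\in\mathfrak{T}_m,q\in\mathfrak{T}_n,q>0\text{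 on }[-\pi,\pi]\}$; $\mathfrak{R}^\alpha_{mn}(2\pi)=\mathcal{F}^\alpha_{\Delta,L}(\mathfrak{R}_{mn}(2\pi))$. $E^\alpha_{mn}(f;[-\pi,\pi])=\inf\{\|f-r^\alpha\|_\infty:r^\alpha\in\mathfrak{R}^\alpha_{mn}(2\pi)\}$ and $E_{mn}(f;[-\pi,\pi])=\inf\{\|f-r\|_\infty:r\in\mathfrak{R}_{mn}(2\pi)\}$. *)

theory Defs
  imports "HOL-Analysis.Analysis"
begin

text \<open>The interval I = [-pi, pi]; functions are modelled as real \<Rightarrow> real,
  only their values on I matter.\<close>

definition Ipi :: "real set" where
  "Ipi = {-pi..pi}"

definition C2pi :: "(real \<Rightarrow> real) set" where
  "C2pi = {f. continuous_on Ipi f \<and> f (-pi) = f pi}"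

definition sup_norm :: "(real \<Rightarrow> real) \<Rightarrow> real" where
  "sup_norm g = Sup ((\<lambda>x. \<bar>g x\<bar>) ` Ipi)"

definition knot_partition :: "nat \<Rightarrow> (nat \<Rightarrow> real) \<Rightarrow> bool" where
  "knot_partition N xs \<longleftrightarrow> 2 \<le> N \<and> xs 0 = -pi \<and> xs N = pi \<and> (\<forall>i<N. xs i < xs (Suc i))"

text \<open>Affine maps L_i(x) = a_i x + b_i of I onto I_i with L_i(x_0)=x_{i-1}, L_i(x_N)=x_i.\<close>
definition aff_a :: "nat \<Rightarrow> (nat \<Rightarrow> real) \<Rightarrow> nat \<Rightarrow> real" where
  "aff_a N xs i = (xs i - xs (i - 1)) / (xs N - xs 0)"

definition aff_b :: "nat \<Rightarrow> (nat \<Rightarrow> real) \<Rightarrow> nat \<Rightarrow> real" where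
  "aff_b N xs i = xs (i - 1) - aff_a N xs i * xs 0"

definition aff_L :: "nat \<Rightarrow> (nat \<Rightarrow> real) \<Rightarrow> nat \<Rightarrow> real \<Rightarrow> real" where
  "aff_L N xs i x = aff_a N xs i * x + aff_b N xs i"

definition aff_L_inv :: "nat \<Rightarrow> (nat \<Rightarrow> real) \<Rightarrow> nat \<Rightarrow> real \<Rightarrow> real" where
  "aff_L_inv N xs i y = (y - aff_b N xs i) / aff_a N xs i"

definition alpha_ok :: "nat \<Rightarrow> (nat \<Rightarrow> real) \<Rightarrow> bool" where
  "alpha_ok N \<alpha> \<longleftrightarrow> (\<forall>i\<in>{1..N}. \<bar>\<alpha> i\<bar> < 1)"

definition alpha_norm :: "nat \<Rightarrow> (nat \<Rightarrow> real) \<Rightarrow> real" where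
  "alpha_norm N \<alpha> = Max ((\<lambda>i. \<bar>\<alpha> i\<bar>) ` {1..N})"

text \<open>The alpha-fractal function f^alpha_{Delta,b}: the unique continuous g on I with
  g(x) = f(x) + alpha_i (g - b)(L_i^{-1}(x)) for x in I_i (normalised to 0 outside I,
  so that it is a unique HOL function).\<close>
definition fif :: "nat \<Rightarrow> (nat \<Rightarrow> real) \<Rightarrow> (nat \<Rightarrow> real) \<Rightarrow> (real \<Rightarrow> real) \<Rightarrow> (real \<Rightarrow> real)
    \<Rightarrow> (real \<Rightarrow> real)" where
  "fif N xs \<alpha> b f = (THE g. continuous_on Ipi g \<and> (\<forall>x. x \<notin> Ipi \<longrightarrow> g x = 0) \<and>
      (\<forall>i\<in>{1..N}. \<forall>x\<in>{xs (i - 1)..xs i}.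
          g x = f x + \<alpha> i * (g (aff_L_inv N xs i x) - b (aff_L_inv N xs i x))))"

definition fractal_op :: "nat \<Rightarrow> (nat \<Rightarrow> real) \<Rightarrow> (nat \<Rightarrow> real)
    \<Rightarrow> ((real \<Rightarrow> real) \<Rightarrow> (real \<Rightarrow> real)) \<Rightarrow> (real \<Rightarrow> real) \<Rightarrow> (real \<Rightarrow> real)" where
  "fractal_op N xs \<alpha> L f = fif N xs \<alpha> (L f) f"

text \<open>L is a bounded linear operator C(2pi) -> C(2pi) (well defined on C(2pi), i.e.
  depending only on values on I) with (Lf)(x_0) = f(x_0), (Lf)(x_N) = f(x_N).\<close>
definition admissible_op :: "nat \<Rightarrow> (nat \<Rightarrow> real) \<Rightarrow> ((real \<Rightarrow> real) \<Rightarrow> (real \<Rightarrow> real)) \<Rightarrow> bool" where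
  "admissible_op N xs L \<longleftrightarrow>
     (\<forall>f\<in>C2pi. L f \<in> C2pi) \<and>
     (\<forall>f\<in>C2pi. \<forall>g\<in>C2pi. (\<forall>x\<in>Ipi. f x = g x) \<longrightarrow> (\<forall>x\<in>Ipi. L f x = L g x)) \<and>
     (\<forall>f\<in>C2pi. \<forall>g\<in>C2pi. \<forall>x\<in>Ipi. L (\<lambda>t. f t + g t) x = L f x + L g x) \<and>
     (\<forall>f\<in>C2pi. \<forall>c. \<forall>x\<in>Ipi. L (\<lambda>t. c * f t) x = c * L f x) \<and>
     (\<exists>K. \<forall>f\<in>C2pi. sup_norm (L f) \<le> K * sup_norm f) \<and>
     (\<forall>f\<in>C2pi. L f (xs 0) = f (xs 0) \<and> L f (xs N) = f (xs N))"

definition op_norm_Id_minus :: "((real \<Rightarrow> real) \<Rightarrow> (real \<Rightarrow> real)) \<Rightarrow> real" where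
  "op_norm_Id_minus L = Sup {sup_norm (\<lambda>x. f x - L f x) | f. f \<in> C2pi \<and> sup_norm f \<le> 1}"

definition trig_poly :: "nat \<Rightarrow> (real \<Rightarrow> real) \<Rightarrow> bool" where
  "trig_poly m p \<longleftrightarrow> (\<exists>a b :: nat \<Rightarrow> real. \<forall>x.
      p x = a 0 + (\<Sum>k=1..m. a k * cos (real k * x) + b k * sin (real k * x)))"

definition rat_trig :: "nat \<Rightarrow> nat \<Rightarrow> (real \<Rightarrow> real) set" where
  "rat_trig m n = {(\<lambda>x. p x / q x) | p q. trig_poly m p \<and> trig_poly n q \<and> (\<forall>x\<in>Ipi. q x > 0)}"

definition frac_rat_trig :: "nat \<Rightarrow> (nat \<Rightarrow> real) \<Rightarrow> (nat \<Rightarrow> real)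
    \<Rightarrow> ((real \<Rightarrow> real) \<Rightarrow> (real \<Rightarrow> real)) \<Rightarrow> nat \<Rightarrow> nat \<Rightarrow> (real \<Rightarrow> real) set" where
  "frac_rat_trig N xs \<alpha> L m n = fractal_op N xs \<alpha> L ` rat_trig m n"

definition E_best :: "nat \<Rightarrow> nat \<Rightarrow> (real \<Rightarrow> real) \<Rightarrow> real" where
  "E_best m n f = Inf {sup_norm (\<lambda>x. f x - r x) | r. r \<in> rat_trig m n}"

definition E_best_alpha :: "nat \<Rightarrow> (nat \<Rightarrow> real) \<Rightarrow> (nat \<Rightarrow> real)
    \<Rightarrow> ((real \<Rightarrow> real) \<Rightarrow> (real \<Rightarrow> real)) \<Rightarrow> nat \<Rightarrow> nat \<Rightarrow> (real \<Rightarrow> real) \<Rightarrow> real" where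
  "E_best_alpha N xs \<alpha> L m n f =
     Inf {sup_norm (\<lambda>x. f x - r x) | r. r \<in> frac_rat_trig N xs \<alpha> L m n}"

end

theory Submission
  imports Defs
begin

lemma Ipi_ne: "-pi \<in> Ipi" "pi \<in> Ipi"
  unfolding Ipi_def by auto

lemma Ipi_nempty: "Ipi \<noteq> {}" using Ipi_ne by auto

lemma compact_Ipi: "compact Ipi" unfolding Ipi_def by simp

lemma sn_bdd: "continuous_on Ipi (g::real\<Rightarrow>real) \<Longrightarrow> bdd_above ((\<lambda>x. \<bar>g x\<bar>) ` Ipi)"
proof -
  assume "continuous_on Ipi g"
  then have "continuous_on Ipi (\<lambda>x. \<bar>g x\<bar>)" by (rule continuous_on_rabs)
  then have "compact ((\<lambda>x. \<bar>g x\<bar>) ` Ipi)" by (intro compact_continuous_image compact_Ipi)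
  then show ?thesis by (intro bounded_imp_bdd_above compact_imp_bounded)
qed

lemma sn_upper: "continuous_on Ipi (g::real\<Rightarrow>real) \<Longrightarrow> x \<in> Ipi \<Longrightarrow> \<bar>g x\<bar> \<le> sup_norm g"
  unfolding sup_norm_def by (rule cSUP_upper) (auto intro: sn_bdd)

lemma sn_least: "(\<And>x. x \<in> Ipi \<Longrightarrow> \<bar>(g::real\<Rightarrow>real) x\<bar> \<le> B) \<Longrightarrow> sup_norm g \<le> B"
  unfolding sup_norm_def using Ipi_ne by (intro cSUP_least) auto

lemma sn_nonneg: "continuous_on Ipi (g::real\<Rightarrow>real) \<Longrightarrow> 0 \<le> sup_norm g"
  using sn_upper[of g "-pi"] Ipi_ne by linarith

lemma sn_cong: "(\<And>x. x \<in> Ipi \<Longrightarrow> (g::real\<Rightarrow>real) x = g' x) \<Longrightarrow> sup_norm g = sup_norm g'"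
  unfolding sup_norm_def by (metis (no_types, lifting) image_cong)

context
  fixes N :: nat and xs :: "nat \<Rightarrow> real"
    and \<alpha> :: "nat \<Rightarrow> real"
  assumes kp: "knot_partition N xs" and ao: "alpha_ok N \<alpha>"
begin

lemma xs_mono: "i \<le> j \<Longrightarrow> j \<le> N \<Longrightarrow> xs i \<le> xs j"
proof (induction j)
  case 0 then show ?case by simp
next
  case (Suc j)
  then show ?case
  proof (cases "i = Suc j")
    case False
    then have "xs i \<le> xs j" using Suc by auto
    moreover have "xs j < xs (Suc j)" using kp Suc.prems unfolding knot_partition_def by auto
    ultimately show ?thesis by simp
  qed simp
qed

lemma xs_strict: "i < j \<Longrightarrow> j \<le> N \<Longrightarrow> xs i < xs j"
proof -
  assume a: "i < j" "j \<le> N"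
  then have "xs i < xs (Suc i)" using kp unfolding knot_partition_def by auto
  moreover have "xs (Suc i) \<le> xs j" using a xs_mono by auto
  ultimately show ?thesis by simp
qed

lemma xs0: "xs 0 = -pi" and xsN: "xs N = pi" and N2: "2 \<le> N"
  using kp unfolding knot_partition_def by auto

lemma aff_a_pos: "i \<in> {1..N} \<Longrightarrow> aff_a N xs i > 0"
  unfolding aff_a_def using xs_strict[of "i-1" i] xs0 xsN by auto

lemma Linv_left: "i \<in> {1..N} \<Longrightarrow> aff_L_inv N xs i (xs (i-1)) = -pi"
  using aff_a_pos[of i] unfolding aff_L_inv_def aff_b_def by (simp add: xs0)

lemma Linv_right: "i \<in> {1..N} \<Longrightarrow> aff_L_inv N xs i (xs i) = pi"
proof -
  assume i: "i \<in> {1..N}"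
  have p: "aff_a N xs i > 0" using aff_a_pos i .
  have "xs i - xs (i-1) = aff_a N xs i * (2*pi)"
    unfolding aff_a_def using xs0 xsN by simp
  then show ?thesis using p unfolding aff_L_inv_def aff_b_def xs0
    by (simp add: field_simps)
qed

lemma Linv_mono: "i \<in> {1..N} \<Longrightarrow> x \<le> y \<Longrightarrow> aff_L_inv N xs i x \<le> aff_L_inv N xs i y"
  using aff_a_pos[of i] unfolding aff_L_inv_def by (simp add: divide_right_mono)

lemma Linv_mem: "i \<in> {1..N} \<Longrightarrow> x \<in> {xs (i-1)..xs i} \<Longrightarrow> aff_L_inv N xs i x \<in> Ipi"
  using Linv_mono[of i "xs (i-1)" x] Linv_mono[of i x "xs i"] Linv_left Linv_right
  unfolding Ipi_def by auto

lemma cover: "x \<in> Ipi \<Longrightarrow> \<exists>j\<in>{1..N}. x \<in> {xs (j-1)..xs j}"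
proof -
  assume x: "x \<in> Ipi"
  define j where "j = (LEAST j. x \<le> xs j)"
  have ex: "x \<le> xs N" using x xsN unfolding Ipi_def by auto
  have jx: "x \<le> xs j" unfolding j_def by (rule LeastI[of _ N], rule ex)
  have jN: "j \<le> N" unfolding j_def by (rule Least_le, rule ex)
  show ?thesis
  proof (cases "j = 0")
    case True
    then have "x = xs 0" using jx x xs0 unfolding Ipi_def by auto
    moreover have "xs 0 \<le> xs 1" using xs_mono N2 by auto
    ultimately show ?thesis using N2 by (intro bexI[of _ 1]) auto
  next
    case False
    have "\<not> x \<le> xs (j-1)" unfolding j_def
      by (rule not_less_Least) (use False j_def in auto)
    then show ?thesis using False jx jN by (intro bexI[of _ j]) auto
  qed
qed

lemma disj: "i \<in> {1..N} \<Longrightarrow> j \<in> {1..N} \<Longrightarrow> i \<noteq> j \<Longrightarrow> x \<in> {xs (j-1)..xs j}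
   \<Longrightarrow> x \<le> xs (i-1) \<or> xs i \<le> x"
proof -
  assume a: "i \<in> {1..N}" "j \<in> {1..N}" "i \<noteq> j" "x \<in> {xs (j-1)..xs j}"
  show ?thesis
  proof (cases "i < j")
    case True
    then have "xs i \<le> xs (j-1)" using a by (intro xs_mono) auto
    then show ?thesis using a by auto
  next
    case False
    then have "xs j \<le> xs (i-1)" using a by (intro xs_mono) auto
    then show ?thesis using a by auto
  qed
qed

lemma outside: "x \<notin> Ipi \<Longrightarrow> i \<in> {1..N} \<Longrightarrow> x \<le> xs (i-1) \<or> xs i \<le> x"
proof -
  assume a: "x \<notin> Ipi" "i \<in> {1..N}"
  have "xs 0 \<le> xs (i-1)" "xs i \<le> xs N" using a by (auto intro: xs_mono)
  then show ?thesis using a xs0 xsN unfolding Ipi_def by auto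
qed

definition Pc :: "nat \<Rightarrow> real \<Rightarrow> real" where
  "Pc i x = aff_L_inv N xs i (max (xs (i-1)) (min (xs i) x))"

lemma Pc_mem: "i \<in> {1..N} \<Longrightarrow> Pc i x \<in> Ipi"
  unfolding Pc_def using xs_strict[of "i-1" i]
  by (intro Linv_mem) auto

lemma Pc_left: "i \<in> {1..N} \<Longrightarrow> x \<le> xs (i-1) \<Longrightarrow> Pc i x = -pi"
  unfolding Pc_def using xs_strict[of "i-1" i] Linv_left
  by (simp add: max_def min_def)

lemma Pc_right: "i \<in> {1..N} \<Longrightarrow> xs i \<le> x \<Longrightarrow> Pc i x = pi"
  unfolding Pc_def using xs_strict[of "i-1" i] Linv_right
  by (simp add: max_def min_def)

lemma Pc_in: "i \<in> {1..N} \<Longrightarrow> x \<in> {xs (i-1)..xs i} \<Longrightarrow> Pc i x = aff_L_inv N xs i x"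
proof -
  assume "x \<in> {xs (i-1)..xs i}"
  then have "max (xs (i-1)) (min (xs i) x) = x" by auto
  then show ?thesis unfolding Pc_def by simp
qed

lemma Pc_cont: "continuous_on UNIV (Pc i)"
  unfolding Pc_def aff_L_inv_def divide_inverse by (intro continuous_intros)

lemma Ii_sub: "i \<in> {1..N} \<Longrightarrow> x \<in> {xs (i-1)..xs i} \<Longrightarrow> x \<in> Ipi"
proof -
  assume a: "i \<in> {1..N}" "x \<in> {xs (i-1)..xs i}"
  have "xs 0 \<le> xs (i-1)" "xs i \<le> xs N" using a by (auto intro: xs_mono)
  then show ?thesis using a xs0 xsN unfolding Ipi_def by auto
qed


abbreviation "anorm \<equiv> alpha_norm N \<alpha>"

lemma anorm_ge: "i \<in> {1..N} \<Longrightarrow> \<bar>\<alpha> i\<bar> \<le> anorm"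
  unfolding alpha_norm_def by (rule Max_ge) auto

lemma anorm_lt: "anorm < 1"
proof -
  have "{1..N} \<noteq> {}" using N2 by auto
  then have "anorm \<in> (\<lambda>i. \<bar>\<alpha> i\<bar>) ` {1..N}" unfolding alpha_norm_def
    by (intro Max_in) auto
  then show ?thesis using ao unfolding alpha_ok_def by auto
qed

lemma anorm_nonneg: "0 \<le> anorm"
  using anorm_ge[of 1] N2 by auto

definition Tm :: "(real \<Rightarrow> real) \<Rightarrow> (real \<Rightarrow> real) \<Rightarrow> real \<Rightarrow> real" where
  "Tm u d = (\<lambda>x. \<Sum>i\<in>{1..N}. \<alpha> i * (d (Pc i x) + u (Pc i x)))"

lemma T_single:
  assumes e1: "d (-pi) + u (-pi) = 0" and e2: "d pi + u pi = 0"
    and j: "j \<in> {1..N}" and x: "x \<in> {xs (j-1)..xs j}"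
  shows "Tm u d x = \<alpha> j * (d (aff_L_inv N xs j x) + u (aff_L_inv N xs j x))"
proof -
  have "Tm u d x = \<alpha> j * (d (Pc j x) + u (Pc j x))
      + (\<Sum>i\<in>{1..N} - {j}. \<alpha> i * (d (Pc i x) + u (Pc i x)))"
    unfolding Tm_def using j by (simp add: sum.remove)
  moreover have "(\<Sum>i\<in>{1..N} - {j}. \<alpha> i * (d (Pc i x) + u (Pc i x))) = 0"
  proof (rule sum.neutral, rule ballI)
    fix i assume i: "i \<in> {1..N} - {j}"
    then have "x \<le> xs (i-1) \<or> xs i \<le> x" using disj[of i j x] j x by auto
    then have "Pc i x = -pi \<or> Pc i x = pi" using Pc_left Pc_right i by auto
    then show "\<alpha> i * (d (Pc i x) + u (Pc i x)) = 0" using e1 e2 by auto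
  qed
  ultimately show ?thesis using Pc_in j x by simp
qed

lemma T_out:
  assumes e1: "d (-pi) + u (-pi) = 0" and e2: "d pi + u pi = 0" and x: "x \<notin> Ipi"
  shows "Tm u d x = 0"
  unfolding Tm_def
proof (rule sum.neutral, rule ballI)
  fix i assume i: "i \<in> {1..N}"
  then have "x \<le> xs (i-1) \<or> xs i \<le> x" using outside x by auto
  then have "Pc i x = -pi \<or> Pc i x = pi" using Pc_left Pc_right i by auto
  then show "\<alpha> i * (d (Pc i x) + u (Pc i x)) = 0" using e1 e2 by auto
qed

lemma x0_in: "-pi \<in> {xs (1-1)..xs 1}" and xN_in: "pi \<in> {xs (N-1)..xs N}"
  using xs_mono[of 0 1] xs_mono[of "N-1" N] N2 xs0 xsN by auto

lemma T_pres:
  assumes cu: "continuous_on Ipi u" and u1: "u (-pi) = 0" and u2: "u pi = 0"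
    and cd: "continuous_on UNIV d" and d1: "d (-pi) = 0" and d2: "d pi = 0"
  shows "continuous_on UNIV (Tm u d) \<and> Tm u d (-pi) = 0 \<and> Tm u d pi = 0"
proof (intro conjI)
  show "continuous_on UNIV (Tm u d)" unfolding Tm_def
  proof (intro continuous_on_sum continuous_on_mult continuous_on_const continuous_on_add)
    fix i assume i: "i \<in> {1..N}"
    show "continuous_on UNIV (\<lambda>x. d (Pc i x))"
      by (rule continuous_on_compose2[OF cd Pc_cont]) auto
    show "continuous_on UNIV (\<lambda>x. u (Pc i x))"
      by (rule continuous_on_compose2[OF cu Pc_cont]) (use Pc_mem i in auto)
  qed
  have "Tm u d (-pi) = \<alpha> 1 * (d (aff_L_inv N xs 1 (-pi)) + u (aff_L_inv N xs 1 (-pi)))"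
    by (rule T_single) (use d1 d2 u1 u2 N2 x0_in in auto)
  also have "aff_L_inv N xs 1 (-pi) = -pi" using Linv_left[of 1] N2 xs0 by auto
  finally show "Tm u d (-pi) = 0" using d1 u1 by simp
  have "Tm u d pi = \<alpha> N * (d (aff_L_inv N xs N pi) + u (aff_L_inv N xs N pi))"
    by (rule T_single) (use d1 d2 u1 u2 N2 xN_in in auto)
  also have "aff_L_inv N xs N pi = pi" using Linv_right[of N] N2 xsN by auto
  finally show "Tm u d pi = 0" using d2 u2 by simp
qed

lemma T_contr:
  assumes u1: "u (-pi) = 0" and u2: "u pi = 0"
    and d1: "d (-pi) = 0" and d2: "d pi = 0"
    and e1: "e (-pi) = 0" and e2: "e pi = 0"
    and B: "\<And>y. y \<in> Ipi \<Longrightarrow> \<bar>d y - e y\<bar> \<le> B"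
  shows "\<bar>Tm u d x - Tm u e x\<bar> \<le> anorm * B"
proof -
  have B0: "0 \<le> B" using B[of "-pi"] Ipi_ne by auto
  show ?thesis
  proof (cases "x \<in> Ipi")
    case True
    then obtain j where j: "j \<in> {1..N}" "x \<in> {xs (j-1)..xs j}" using cover by blast
    define y where "y = aff_L_inv N xs j x"
    have y: "y \<in> Ipi" unfolding y_def using Linv_mem j by auto
    have "Tm u d x - Tm u e x = \<alpha> j * (d y - e y)"
      using T_single[of d u, OF _ _ j] T_single[of e u, OF _ _ j] d1 d2 e1 e2 u1 u2
      unfolding y_def by (simp add: algebra_simps)
    also have "\<bar>\<dots>\<bar> = \<bar>\<alpha> j\<bar> * \<bar>d y - e y\<bar>" by (simp add: abs_mult)
    also have "\<dots> \<le> anorm * B"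
      using anorm_ge[OF j(1)] B[OF y] B0 by (intro mult_mono) auto
    finally show ?thesis .
  next
    case False
    then show ?thesis using T_out[of d u x] T_out[of e u x] d1 d2 e1 e2 u1 u2 B0 anorm_nonneg
      by simp
  qed
qed

lemma T_bound:
  assumes u1: "u (-pi) = 0" and u2: "u pi = 0"
    and d1: "d (-pi) = 0" and d2: "d pi = 0"
    and B: "\<And>y. y \<in> Ipi \<Longrightarrow> \<bar>d y + u y\<bar> \<le> B"
  shows "\<bar>Tm u d x\<bar> \<le> anorm * B"
proof -
  have B0: "0 \<le> B" using B[of "-pi"] Ipi_ne by auto
  show ?thesis
  proof (cases "x \<in> Ipi")
    case True
    then obtain j where j: "j \<in> {1..N}" "x \<in> {xs (j-1)..xs j}" using cover by blast
    define y where "y = aff_L_inv N xs j x"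
    have y: "y \<in> Ipi" unfolding y_def using Linv_mem j by auto
    have "Tm u d x = \<alpha> j * (d y + u y)"
      using T_single[of d u, OF _ _ j] d1 d2 u1 u2 unfolding y_def by simp
    also have "\<bar>\<dots>\<bar> = \<bar>\<alpha> j\<bar> * \<bar>d y + u y\<bar>" by (simp add: abs_mult)
    also have "\<dots> \<le> anorm * B"
      using anorm_ge[OF j(1)] B[OF y] B0 by (intro mult_mono) auto
    finally show ?thesis .
  next
    case False
    then show ?thesis using T_out[of d u x] d1 d2 u1 u2 B0 anorm_nonneg by simp
  qed
qed

lemma T_exists:
  assumes cu: "continuous_on Ipi u" and u1: "u (-pi) = 0" and u2: "u pi = 0"
  shows "\<exists>D. continuous_on UNIV D \<and> D (-pi) = 0 \<and> D pi = 0 \<and> (\<forall>x. Tm u D x = D x)"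
proof -
  obtain U where U: "\<And>y. y \<in> Ipi \<Longrightarrow> \<bar>u y\<bar> \<le> U"
  proof -
    have "compact (u ` Ipi)" by (intro compact_continuous_image cu compact_Ipi)
    then obtain U where "\<forall>z\<in>u ` Ipi. norm z \<le> U"
      using compact_imp_bounded bounded_iff by metis
    then show ?thesis using that by auto
  qed
  define dd where "dd k = (Tm u ^^ k) (\<lambda>x. 0)" for k
  have dd0: "dd 0 = (\<lambda>x. 0)" and ddS: "\<And>k. dd (Suc k) = Tm u (dd k)"
    unfolding dd_def by auto
  have inv: "continuous_on UNIV (dd k) \<and> dd k (-pi) = 0 \<and> dd k pi = 0" for k
  proof (induction k)
    case 0 then show ?case by (simp add: dd0)
  next
    case (Suc k) then show ?case unfolding ddS using T_pres[OF cu u1 u2] by blast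
  qed
  define a where "a = anorm"
  have a0: "0 \<le> a" and a1: "a < 1" using anorm_nonneg anorm_lt a_def by auto
  have step: "\<bar>dd (Suc k) x - dd k x\<bar> \<le> a ^ k * (a * U)" for k x
  proof (induction k arbitrary: x)
    case 0
    have "\<bar>Tm u (\<lambda>x. 0) x\<bar> \<le> anorm * U"
      by (rule T_bound) (use u1 u2 U in auto)
    then show ?case by (simp add: dd0 ddS a_def)
  next
    case (Suc k)
    have "\<bar>Tm u (dd (Suc k)) x - Tm u (dd k) x\<bar> \<le> anorm * (a ^ k * (a * U))"
      by (rule T_contr) (use u1 u2 inv Suc.IH in auto)
    then show ?case by (simp add: ddS[of "Suc k"] ddS[of k] a_def[symmetric])
  qed
  have summ: "summable (\<lambda>k. a ^ k * (a * U))"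
    by (rule summable_mult2, rule summable_geometric) (use a0 a1 in auto)
  have ul0: "uniform_limit UNIV (\<lambda>n x. \<Sum>i<n. dd (Suc i) x - dd i x)
      (\<lambda>x. suminf (\<lambda>i. dd (Suc i) x - dd i x)) sequentially"
    by (rule Weierstrass_m_test[OF _ summ]) (use step in auto)
  define D where "D = (\<lambda>x. suminf (\<lambda>i. dd (Suc i) x - dd i x))"
  have eqs: "(\<lambda>n x. \<Sum>i<n. dd (Suc i) x - dd i x) = dd"
  proof (intro ext)
    fix n x show "(\<Sum>i<n. dd (Suc i) x - dd i x) = dd n x"
      using sum_lessThan_telescope[of "\<lambda>i. dd i x" n] by (simp add: dd0)
  qed
  have ul: "uniform_limit UNIV dd D sequentially" using ul0 unfolding eqs D_def .
  have pw: "(\<lambda>k. dd k x) \<longlonglongrightarrow> D x" for x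
    using tendsto_uniform_limitI[OF ul] by auto
  have cD: "continuous_on UNIV D"
    by (rule uniform_limit_theorem[OF _ ul]) (use inv in auto)
  have D1: "D (-pi) = 0"
  proof -
    have "(\<lambda>k. dd k (-pi)) = (\<lambda>k. 0)" using inv by auto
    then show ?thesis using pw[of "-pi"] LIMSEQ_unique tendsto_const by metis
  qed
  have D2: "D pi = 0"
  proof -
    have "(\<lambda>k. dd k pi) = (\<lambda>k. 0)" using inv by auto
    then show ?thesis using pw[of "pi"] LIMSEQ_unique tendsto_const by metis
  qed
  have fixD: "Tm u D x = D x" for x
  proof -
    have "(\<lambda>k. dd (Suc k) x) \<longlonglongrightarrow> D x" using pw LIMSEQ_Suc by blast
    moreover have "(\<lambda>k. dd (Suc k) x) \<longlonglongrightarrow> Tm u D x"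
      unfolding ddS Tm_def
      by (intro tendsto_sum tendsto_mult tendsto_const tendsto_add pw)
    ultimately show ?thesis using LIMSEQ_unique by metis
  qed
  show ?thesis using cD D1 D2 fixD by blast
qed

lemma fif_main:
  assumes ch: "continuous_on Ipi h" and cb: "continuous_on Ipi b"
    and hb1: "h (-pi) = b (-pi)" and hb2: "h pi = b pi"
  shows "continuous_on Ipi (fif N xs \<alpha> b h) \<and>
    (\<forall>x\<in>Ipi. \<bar>fif N xs \<alpha> b h x - h x\<bar> \<le> anorm / (1 - anorm) * sup_norm (\<lambda>x. h x - b x))"
proof -
  define u where "u = (\<lambda>x. h x - b x)"
  have cu: "continuous_on Ipi u" unfolding u_def using ch cb by (intro continuous_intros)
  have u1: "u (-pi) = 0" and u2: "u pi = 0" using hb1 hb2 unfolding u_def by auto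
  obtain D where cD: "continuous_on UNIV D" and D1: "D (-pi) = 0" and D2: "D pi = 0"
    and fixD: "\<And>x. Tm u D x = D x"
    using T_exists[OF cu u1 u2] by blast
  define g where "g = (\<lambda>x. if x \<in> Ipi then h x + D x else 0)"
  let ?P = "\<lambda>g. continuous_on Ipi g \<and> (\<forall>x. x \<notin> Ipi \<longrightarrow> g x = 0) \<and>
      (\<forall>i\<in>{1..N}. \<forall>x\<in>{xs (i - 1)..xs i}.
          g x = h x + \<alpha> i * (g (aff_L_inv N xs i x) - b (aff_L_inv N xs i x)))"
  have a1: "anorm < 1" and a0: "0 \<le> anorm" using anorm_lt anorm_nonneg by auto
  have Pg: "?P g"
  proof (intro conjI ballI allI impI)
    have "continuous_on Ipi (\<lambda>x. h x + D x)"
      using ch continuous_on_subset[OF cD] by (intro continuous_intros) auto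
    then show "continuous_on Ipi g"
      by (rule continuous_on_eq) (simp add: g_def)
  next
    fix x assume "x \<notin> Ipi" then show "g x = 0" by (simp add: g_def)
  next
    fix i x assume i: "i \<in> {1..N}" and x: "x \<in> {xs (i - 1)..xs i}"
    define y where "y = aff_L_inv N xs i x"
    have y: "y \<in> Ipi" unfolding y_def using Linv_mem i x by auto
    have xI: "x \<in> Ipi" using Ii_sub i x by auto
    have "D x = \<alpha> i * (D y + u y)"
      using fixD[of x] T_single[of D u, OF _ _ i x] D1 D2 u1 u2 unfolding y_def by simp
    then show "g x = h x + \<alpha> i * (g (aff_L_inv N xs i x) - b (aff_L_inv N xs i x))"
      using xI y unfolding g_def y_def[symmetric] u_def by (simp add: algebra_simps)
  qed
  have uniq: "g' = g" if Pg': "?P g'" for g'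
  proof -
    define e where "e = (\<lambda>x. g' x - g x)"
    have ce: "continuous_on Ipi e" unfolding e_def using Pg Pg' by (intro continuous_intros) auto
    obtain y0 where y0: "y0 \<in> Ipi" and ymax: "\<And>y. y \<in> Ipi \<Longrightarrow> \<bar>e y\<bar> \<le> \<bar>e y0\<bar>"
      using continuous_attains_sup[OF compact_Ipi Ipi_nempty continuous_on_rabs[OF ce]] by auto
    obtain j where j: "j \<in> {1..N}" "y0 \<in> {xs (j-1)..xs j}" using cover y0 by blast
    define z where "z = aff_L_inv N xs j y0"
    have z: "z \<in> Ipi" unfolding z_def using Linv_mem j by auto
    have "g' y0 = h y0 + \<alpha> j * (g' z - b z)" using Pg' j unfolding z_def by simp
    moreover have "g y0 = h y0 + \<alpha> j * (g z - b z)" using Pg j unfolding z_def by simp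
    ultimately have "e y0 = \<alpha> j * e z"
      unfolding e_def by (simp add: algebra_simps)
    then have "\<bar>e y0\<bar> = \<bar>\<alpha> j\<bar> * \<bar>e z\<bar>" by (simp add: abs_mult)
    also have "\<dots> \<le> anorm * \<bar>e y0\<bar>"
      using anorm_ge[OF j(1)] ymax[OF z] by (intro mult_mono) auto
    finally have "\<bar>e y0\<bar> * (1 - anorm) \<le> 0" by (simp add: algebra_simps)
    then have "\<bar>e y0\<bar> \<le> 0" using a1 by (simp add: mult_le_0_iff)
    then have "\<bar>e y0\<bar> = 0" by simp
    then have "\<forall>y\<in>Ipi. e y = 0" using ymax by fastforce
    show ?thesis
    proof (rule ext)
      fix x show "g' x = g x"
      proof (cases "x \<in> Ipi")
        case True then have "e x = 0" using \<open>\<forall>y\<in>Ipi. e y = 0\<close> by blast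
        then show ?thesis unfolding e_def by simp
      next
        case False then show ?thesis using Pg Pg' by simp
      qed
    qed
  qed
  have fg: "fif N xs \<alpha> b h = g"
  proof -
    have ex1: "\<exists>!g. ?P g" by (rule ex1I[of ?P g], rule Pg, erule uniq)
    show ?thesis unfolding fif_def by (rule the1_equality[of ?P g, OF ex1 Pg])
  qed
  have cg: "continuous_on Ipi g" using Pg by (rule conjunct1)
  have bound: "\<bar>g x - h x\<bar> \<le> anorm / (1 - anorm) * sup_norm (\<lambda>x. h x - b x)" if x: "x \<in> Ipi" for x
  proof -
    define S where "S = sup_norm u"
    have cDI: "continuous_on Ipi D" using continuous_on_subset[OF cD] by auto
    obtain y0 where y0: "y0 \<in> Ipi" and ymax: "\<And>y. y \<in> Ipi \<Longrightarrow> \<bar>D y\<bar> \<le> \<bar>D y0\<bar>"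
      using continuous_attains_sup[OF compact_Ipi Ipi_nempty continuous_on_rabs[OF cDI]] by auto
    obtain j where j: "j \<in> {1..N}" "y0 \<in> {xs (j-1)..xs j}" using cover y0 by blast
    define z where "z = aff_L_inv N xs j y0"
    have z: "z \<in> Ipi" unfolding z_def using Linv_mem j by auto
    have "D y0 = \<alpha> j * (D z + u z)"
      using fixD[of y0] T_single[of D u, OF _ _ j] D1 D2 u1 u2 unfolding z_def by simp
    then have "\<bar>D y0\<bar> = \<bar>\<alpha> j\<bar> * \<bar>D z + u z\<bar>" by (simp add: abs_mult)
    also have "\<dots> \<le> anorm * (\<bar>D y0\<bar> + S)"
    proof (rule mult_mono)
      show "\<bar>D z + u z\<bar> \<le> \<bar>D y0\<bar> + S"
        using ymax[OF z] sn_upper[OF cu z] unfolding S_def by linarith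
    qed (use anorm_ge[OF j(1)] a0 in auto)
    finally have "\<bar>D y0\<bar> * (1 - anorm) \<le> anorm * S" by (simp add: algebra_simps)
    then have "\<bar>D y0\<bar> \<le> anorm * S / (1 - anorm)" using a1 by (simp add: field_simps)
    moreover have "\<bar>g x - h x\<bar> = \<bar>D x\<bar>" using x by (simp add: g_def)
    ultimately show ?thesis using ymax[OF x] unfolding S_def u_def by simp
  qed
  show ?thesis using fg cg bound by simp
qed

end

lemma trig_props: "trig_poly m p \<Longrightarrow> continuous_on UNIV p \<and> p (-pi) = p pi"
proof -
  assume "trig_poly m p"
  then obtain a b :: "nat \<Rightarrow> real" where
    pe: "\<And>x. p x = a 0 + (\<Sum>k=1..m. a k * cos (real k * x) + b k * sin (real k * x))"
    unfolding trig_poly_def by blast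
  have pp: "p = (\<lambda>x. a 0 + (\<Sum>k=1..m. a k * cos (real k * x) + b k * sin (real k * x)))"
    using pe by (intro ext) simp
  have "continuous_on UNIV p" unfolding pp by (intro continuous_intros)
  moreover have "p (-pi) = p pi" unfolding pp by simp
  ultimately show ?thesis by simp
qed

lemma rat_C2pi: "r \<in> rat_trig m n \<Longrightarrow> r \<in> C2pi"
proof -
  assume "r \<in> rat_trig m n"
  then obtain p q where r: "r = (\<lambda>x. p x / q x)" and p: "trig_poly m p" and q: "trig_poly n q"
    and qp: "\<forall>x\<in>Ipi. q x > 0" unfolding rat_trig_def by blast
  have cp: "continuous_on Ipi p" and cq: "continuous_on Ipi q"
    using trig_props[OF p] trig_props[OF q] continuous_on_subset by blast+
  have "continuous_on Ipi r" unfolding r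
    by (rule continuous_on_divide[OF cp cq]) (use qp in force)
  moreover have "r (-pi) = r pi" unfolding r using trig_props[OF p] trig_props[OF q] by simp
  ultimately show ?thesis unfolding C2pi_def by simp
qed

lemma rat_nonempty: "(\<lambda>x. 0 / 1) \<in> rat_trig m n"
proof -
  have "trig_poly m (\<lambda>x. 0)" unfolding trig_poly_def
    by (rule exI[of _ "\<lambda>k. 0"], rule exI[of _ "\<lambda>k. 0"]) simp
  moreover have "trig_poly n (\<lambda>x. 1)" unfolding trig_poly_def
    by (rule exI[of _ "\<lambda>k. if k = 0 then 1 else 0"], rule exI[of _ "\<lambda>k. 0"]) simp
  ultimately show ?thesis unfolding rat_trig_def by force
qed

lemma op_norm_props:
  assumes adm: "admissible_op N xs L"
  shows "0 \<le> op_norm_Id_minus L \<and>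
    (\<forall>r\<in>C2pi. sup_norm (\<lambda>x. r x - L r x) \<le> op_norm_Id_minus L * sup_norm r)"
proof -
  have A1: "\<And>f. f \<in> C2pi \<Longrightarrow> L f \<in> C2pi" using adm unfolding admissible_op_def by blast
  have A2: "\<And>f g x. f \<in> C2pi \<Longrightarrow> g \<in> C2pi \<Longrightarrow> (\<forall>x\<in>Ipi. f x = g x) \<Longrightarrow> x \<in> Ipi \<Longrightarrow> L f x = L g x"
    using adm unfolding admissible_op_def by blast
  have A4: "\<And>f c x. f \<in> C2pi \<Longrightarrow> x \<in> Ipi \<Longrightarrow> L (\<lambda>t. c * f t) x = c * L f x"
    using adm unfolding admissible_op_def by blast
  obtain K where A5: "\<And>f. f \<in> C2pi \<Longrightarrow> sup_norm (L f) \<le> K * sup_norm f"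
    using adm unfolding admissible_op_def by blast
  have cC: "\<And>f. f \<in> C2pi \<Longrightarrow> continuous_on Ipi f" unfolding C2pi_def by blast
  define z :: "real \<Rightarrow> real" where "z = (\<lambda>t. 0)"
  have zC: "z \<in> C2pi" unfolding z_def C2pi_def by simp
  have Lz: "L z x = 0" if "x \<in> Ipi" for x
    using A4[OF zC that, of 0] unfolding z_def by simp
  define SS where "SS = {sup_norm (\<lambda>x. f x - L f x) | f. f \<in> C2pi \<and> sup_norm f \<le> 1}"
  have bdd: "bdd_above SS"
  proof (rule bdd_aboveI[of _ "1 + \<bar>K\<bar>"])
    fix y assume "y \<in> SS"
    then obtain f where y: "y = sup_norm (\<lambda>x. f x - L f x)" and f: "f \<in> C2pi" "sup_norm f \<le> 1"
      unfolding SS_def by blast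
    have s0: "0 \<le> sup_norm f" using sn_nonneg cC f by blast
    have "sup_norm (\<lambda>x. f x - L f x) \<le> sup_norm f + sup_norm (L f)"
    proof (rule sn_least)
      fix x assume x: "x \<in> Ipi"
      show "\<bar>f x - L f x\<bar> \<le> sup_norm f + sup_norm (L f)"
        using sn_upper[OF cC[OF f(1)] x] sn_upper[OF cC[OF A1[OF f(1)]] x] by linarith
    qed
    also have "\<dots> \<le> 1 + K * sup_norm f" using A5[OF f(1)] f(2) by linarith
    also have "K * sup_norm f \<le> \<bar>K\<bar>"
    proof -
      have "K * sup_norm f \<le> \<bar>K\<bar> * sup_norm f" using s0 by (intro mult_right_mono) auto
      also have "\<dots> \<le> \<bar>K\<bar> * 1" using f(2) by (intro mult_left_mono) auto
      finally show ?thesis by simp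
    qed
    finally show "y \<le> 1 + \<bar>K\<bar>" using y by simp
  qed
  have zs: "sup_norm z \<le> 1" by (rule sn_least) (simp add: z_def)
  have zin: "sup_norm (\<lambda>x. z x - L z x) \<in> SS" unfolding SS_def using zC zs by blast
  have nonneg: "0 \<le> op_norm_Id_minus L"
  proof -
    have "0 \<le> sup_norm (\<lambda>x. z x - L z x)"
      using cC[OF zC] cC[OF A1[OF zC]] by (intro sn_nonneg continuous_intros)
    also have "\<dots> \<le> Sup SS" by (rule cSup_upper[OF zin bdd])
    finally show ?thesis unfolding op_norm_Id_minus_def SS_def .
  qed
  have main: "sup_norm (\<lambda>x. r x - L r x) \<le> op_norm_Id_minus L * sup_norm r" if r: "r \<in> C2pi" for r
  proof (cases "sup_norm r = 0")
    case True
    have r0: "r x = 0" if "x \<in> Ipi" for x using sn_upper[OF cC[OF r] that] True by simp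
    have "sup_norm (\<lambda>x. r x - L r x) \<le> 0"
    proof (rule sn_least)
      fix x assume x: "x \<in> Ipi"
      have "L r x = L z x" by (rule A2[OF r zC _ x]) (simp add: r0 z_def)
      then show "\<bar>r x - L r x\<bar> \<le> 0" using r0[OF x] Lz[OF x] by simp
    qed
    then show ?thesis using True by simp
  next
    case False
    define s where "s = sup_norm r"
    have sp: "s > 0" using False sn_nonneg[OF cC[OF r]] unfolding s_def by simp
    define f where "f = (\<lambda>t. (1/s) * r t)"
    have "continuous_on Ipi f" unfolding f_def using cC[OF r] by (intro continuous_intros)
    then have fC: "f \<in> C2pi" using r unfolding f_def C2pi_def by simp
    have fs: "sup_norm f \<le> 1"
    proof (rule sn_least)
      fix x assume x: "x \<in> Ipi"
      have "\<bar>f x\<bar> = \<bar>r x\<bar> / s" unfolding f_def using sp by (simp add: abs_mult)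
      also have "\<dots> \<le> 1" using sn_upper[OF cC[OF r] x] sp unfolding s_def by simp
      finally show "\<bar>f x\<bar> \<le> 1" .
    qed
    have "sup_norm (\<lambda>x. f x - L f x) \<in> SS" unfolding SS_def using fC fs by blast
    then have fw: "sup_norm (\<lambda>x. f x - L f x) \<le> op_norm_Id_minus L"
      unfolding op_norm_Id_minus_def SS_def[symmetric] using bdd by (rule cSup_upper)
    show ?thesis
    proof (rule sn_least)
      fix x assume x: "x \<in> Ipi"
      have "L f x = (1/s) * L r x" unfolding f_def by (rule A4[OF r x])
      then have "r x - L r x = s * (f x - L f x)" unfolding f_def using sp by (simp add: field_simps)
      then have "\<bar>r x - L r x\<bar> = s * \<bar>f x - L f x\<bar>" using sp by (simp add: abs_mult)
      also have "\<dots> \<le> s * op_norm_Id_minus L"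
        using sn_upper[OF _ x, of "\<lambda>x. f x - L f x"] cC[OF fC] cC[OF A1[OF fC]] fw sp
        by (intro mult_left_mono) (auto intro: continuous_intros order_trans)
      finally show "\<bar>r x - L r x\<bar> \<le> op_norm_Id_minus L * sup_norm r"
        unfolding s_def by (simp add: mult.commute)
    qed
  qed
  show ?thesis using nonneg main by blast
qed

theorem mainTheorem6:
  fixes N :: nat and xs :: "nat \<Rightarrow> real" and \<alpha> :: "nat \<Rightarrow> real"
    and L :: "(real \<Rightarrow> real) \<Rightarrow> (real \<Rightarrow> real)"
    and f :: "real \<Rightarrow> real" and m n :: nat
  assumes "knot_partition N xs"
    and "alpha_ok N \<alpha>"
    and "admissible_op N xs L"
    and "f \<in> C2pi"
  shows "E_best_alpha N xs \<alpha> L m n f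
    \<le> (1 + alpha_norm N \<alpha> * (op_norm_Id_minus L - 1)) / (1 - alpha_norm N \<alpha>) * E_best m n f
      + alpha_norm N \<alpha> / (1 - alpha_norm N \<alpha>) * op_norm_Id_minus L * sup_norm f"
proof -
  note kp = assms(1) and ao = assms(2) and adm = assms(3) and fC = assms(4)
  define a where "a = alpha_norm N \<alpha>"
  define w where "w = op_norm_Id_minus L"
  define C1 where "C1 = (1 + a * (w - 1)) / (1 - a)"
  define C2 where "C2 = a / (1 - a) * w * sup_norm f"
  have a0: "0 \<le> a" and a1: "a < 1" unfolding a_def using anorm_nonneg[OF kp ao] anorm_lt[OF kp ao] by auto
  have w0: "0 \<le> w" and wr: "\<And>r. r \<in> C2pi \<Longrightarrow> sup_norm (\<lambda>x. r x - L r x) \<le> w * sup_norm r"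
    using op_norm_props[OF adm] unfolding w_def by auto
  have A1: "\<And>g. g \<in> C2pi \<Longrightarrow> L g \<in> C2pi" using adm unfolding admissible_op_def by blast
  have Aend: "\<And>g. g \<in> C2pi \<Longrightarrow> L g (xs 0) = g (xs 0) \<and> L g (xs N) = g (xs N)"
    using adm unfolding admissible_op_def by blast
  have cC: "\<And>g. g \<in> C2pi \<Longrightarrow> continuous_on Ipi g" unfolding C2pi_def by blast
  have xe: "xs 0 = -pi" "xs N = pi" using xs0[OF kp ao] xsN[OF kp ao] by auto
  have fr: "continuous_on Ipi (fractal_op N xs \<alpha> L r) \<and>
     (\<forall>x\<in>Ipi. \<bar>fractal_op N xs \<alpha> L r x - r x\<bar> \<le> a / (1 - a) * sup_norm (\<lambda>x. r x - L r x))"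
    if r: "r \<in> rat_trig m n" for r
  proof -
    have rC: "r \<in> C2pi" using rat_C2pi r by blast
    show ?thesis unfolding fractal_op_def a_def
      by (rule fif_main[OF kp ao cC[OF rC] cC[OF A1[OF rC]]]) (use Aend[OF rC] xe in auto)
  qed
  define SA where "SA = {sup_norm (\<lambda>x. f x - g x) | g. g \<in> frac_rat_trig N xs \<alpha> L m n}"
  have bddA: "bdd_below SA"
  proof (rule bdd_belowI[of _ 0])
    fix y assume "y \<in> SA"
    then obtain r where y: "y = sup_norm (\<lambda>x. f x - fractal_op N xs \<alpha> L r x)" and r: "r \<in> rat_trig m n"
      unfolding SA_def frac_rat_trig_def by blast
    show "0 \<le> y" unfolding y using fr[OF r] cC[OF fC] by (intro sn_nonneg continuous_intros) auto
  qed
  have key: "E_best_alpha N xs \<alpha> L m n f \<le> C1 * sup_norm (\<lambda>x. f x - r x) + C2"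
    if r: "r \<in> rat_trig m n" for r
  proof -
    define g where "g = fractal_op N xs \<alpha> L r"
    define s where "s = sup_norm (\<lambda>x. f x - r x)"
    have rC: "r \<in> C2pi" using rat_C2pi r by blast
    have gin: "sup_norm (\<lambda>x. f x - g x) \<in> SA"
      unfolding SA_def frac_rat_trig_def g_def using r by blast
    have E1: "E_best_alpha N xs \<alpha> L m n f \<le> sup_norm (\<lambda>x. f x - g x)"
      unfolding E_best_alpha_def SA_def[symmetric] by (rule cInf_lower[OF gin bddA])
    have cfr: "continuous_on Ipi (\<lambda>x. f x - r x)" using cC[OF fC] cC[OF rC] by (intro continuous_intros)
    have rn: "sup_norm r \<le> sup_norm f + s"
    proof (rule sn_least)
      fix x assume x: "x \<in> Ipi"
      show "\<bar>r x\<bar> \<le> sup_norm f + s"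
        using sn_upper[OF cC[OF fC] x] sn_upper[OF cfr x] unfolding s_def by linarith
    qed
    have c0: "0 \<le> a / (1 - a)" using a0 a1 by simp
    have "sup_norm (\<lambda>x. f x - g x) \<le> s + a / (1 - a) * (w * (sup_norm f + s))"
    proof (rule sn_least)
      fix x assume x: "x \<in> Ipi"
      have "\<bar>g x - r x\<bar> \<le> a / (1 - a) * sup_norm (\<lambda>x. r x - L r x)"
        using fr[OF r] x unfolding g_def by blast
      also have "\<dots> \<le> a / (1 - a) * (w * (sup_norm f + s))"
        using wr[OF rC] rn w0 c0 by (intro mult_left_mono) (auto intro: order_trans mult_left_mono)
      finally have "\<bar>g x - r x\<bar> \<le> a / (1 - a) * (w * (sup_norm f + s))" .
      then show "\<bar>f x - g x\<bar> \<le> s + a / (1 - a) * (w * (sup_norm f + s))"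
        using sn_upper[OF cfr x] unfolding s_def by linarith
    qed
    also have "\<dots> = C1 * s + C2"
    proof -
      have ne: "1 - a \<noteq> 0" using a1 by simp
      have "C1 = 1 + a / (1 - a) * w" unfolding C1_def using ne
        by (simp add: divide_simps) (simp add: algebra_simps)
      then show ?thesis unfolding C2_def by (simp add: algebra_simps)
    qed
    finally show ?thesis using E1 unfolding s_def by linarith
  qed
  have C1p: "0 < C1"
  proof -
    have "0 \<le> a * w" using a0 w0 by simp
    then have "0 < 1 + a * (w - 1)" using a1 by (simp add: algebra_simps)
    then show ?thesis unfolding C1_def using a1 by simp
  qed
  define S where "S = {sup_norm (\<lambda>x. f x - r x) | r. r \<in> rat_trig m n}"
  have Sne: "S \<noteq> {}" unfolding S_def using rat_nonempty by blast
  have "(E_best_alpha N xs \<alpha> L m n f - C2) / C1 \<le> Inf S"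
  proof (rule cInf_greatest[OF Sne])
    fix y assume "y \<in> S"
    then obtain r where y: "y = sup_norm (\<lambda>x. f x - r x)" and r: "r \<in> rat_trig m n"
      unfolding S_def by blast
    show "(E_best_alpha N xs \<alpha> L m n f - C2) / C1 \<le> y"
      using key[OF r] C1p unfolding y by (simp add: pos_divide_le_eq algebra_simps)
  qed
  then have "E_best_alpha N xs \<alpha> L m n f \<le> C1 * E_best m n f + C2"
    using C1p unfolding E_best_def S_def[symmetric] by (simp add: pos_divide_le_eq algebra_simps)
  then show ?thesis unfolding C1_def C2_def a_def w_def .
qed

end
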